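(* Let $\{p_{(R,\alpha)}(\mathbf{x})\}_{(R,\alpha)}$ be a replacement rule satisfying the Fixation Axiom and Assumptions 1, 3 and 4. Then for every state $\mathbf{x}\in\{0,1\}^G$, $$\hat\Delta_{\mathrm{sel}}(\mathbf{x})=\sum_{i\in I}X_i\big(W_i(\mathbf{x})-V_i\big).$$
   Context: $G$ is a finite nonempty set of genetic sites, $n=|G|$, partitioned into sets $G_i$ ($i\in I$, the individuals), $n_i=|G_i|$; $g\sim h$ means $g,h\in G_i$ for some $i$. A state is $\mathbf{x}\in\{0,1\}^G$; $\mathbf{a}$ is the all-zero and $\mathbf{A}$ the all-one state. A replacement event is $(R,\alpha)$ with $R\subseteq G$, $\alpha:R\to G$; a replacement rule gives for each state a probability distribution $\{p_{(R,\alpha)}(\mathbf{x})\}$ over events. Fixation Axiom: there exist $g\in G$, $m\ge1$, events $(R_k,\alpha_k)_{k=1}^m$ with $p_{(R_k,\alpha_k)}(\mathbf{x})>0$ for all $k,\mathbf{x}$, $g\in R_k$ for some $k$, and $\tilde\alpha_1\circ\cdots\circ\tilde\alpha_m(h)=g$ for all $h$, where $\tilde\alpha_k$ equals $\alpha_k$ on $R_k$ and the identity elsewhere. $e_{gh}(\mathbf{x})=\sum_{(R,\alpha):h\in R,\alpha(h)=g}p_{(R,\alpha)}(\mathbf{x})$, $d_g(\mathbf{x})=\sum_he_{hg}(\mathbf{x})$. Assumption 1: $p_{(R,\alpha)}(\mathbf{A})=p_{(R,\alpha)}(\mathbf{a})$ for all events; $e^\circ_{gh},d^\circ_g$ denote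 values in these states. Reproductive values: the unique $(v_g)$ with $d^\circ_gv_g=\sum_he^\circ_{gh}v_h$ for all $g$ and $\sum_gv_g=n$. $\hat b_g(\mathbf{x})=\sum_he_{gh}(\mathbf{x})v_h$, $\hat d_g(\mathbf{x})=v_gd_g(\mathbf{x})$, fitness $w_g(\mathbf{x})=v_g-\hat d_g(\mathbf{x})+\hat b_g(\mathbf{x})$, $\hat\Delta_{\mathrm{sel}}(\mathbf{x})=\sum_gx_g(\hat b_g(\mathbf{x})-\hat d_g(\mathbf{x}))$. Individual quantities: $X_i=\frac1{n_i}\sum_{g\in G_i}x_g$, $V_i=\sum_{g\in G_i}v_g$, $W_i(\mathbf{x})=\sum_{g\in G_i}w_g(\mathbf{x})$. Assumption 3 (coherence of individuals): if $g\sim h$, then for each state $\mathbf{x}$ and each event $(R,\alpha)$ with $p_{(R,\alpha)}(\mathbf{x})>0$, either $g,h\in R$ or $g,h\notin R$. Assumption 4 (fair meiosis): if $(R,\alpha_1)$, $(R,\alpha_2)$ are events with the same $R$ and $\alpha_1(g)\sim\alpha_2(g)$ for all $g\in R$, then $p_{(R,\alpha_1)}(\mathbf{x})=p_{(R,\alpha_2)}(\mathbf{x})$ for every state $\mathbf{x}$. *)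

theory Defs
  imports Complex_Main
begin

text \<open>Genetic sites form the finite type 'g (so G = UNIV, n = CARD('g)).
  A state is a function 'g \<Rightarrow> bool (x_g = 1 iff x g).
  An event (R, \<alpha>) with \<alpha> : R \<rightarrow> G is represented by the pair (R, \<alpha>~), where \<alpha>~
  agrees with \<alpha> on R and is the identity outside R.
  Individuals: ind :: 'g \<Rightarrow> 'i, I = range ind, G_i = {g. ind g = i}.\<close>

type_synonym 'g event = "'g set \<times> ('g \<Rightarrow> 'g)"
type_synonym 'g rule = "'g event \<Rightarrow> ('g \<Rightarrow> bool) \<Rightarrow> real"

definition events :: "'g event set" where
  "events = {(R, \<alpha>). \<forall>h. h \<notin> R \<longrightarrow> \<alpha> h = h}"

definition state_a :: "'g \<Rightarrow> bool" where "state_a = (\<lambda>_. False)"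
definition state_A :: "'g \<Rightarrow> bool" where "state_A = (\<lambda>_. True)"

definition replacement_rule :: "('g::finite) rule \<Rightarrow> bool" where
  "replacement_rule p \<longleftrightarrow>
     (\<forall>x. \<forall>ev\<in>events. 0 \<le> p ev x) \<and> (\<forall>x. (\<Sum>ev\<in>events. p ev x) = 1)"

definition fixation_axiom :: "('g::finite) rule \<Rightarrow> bool" where
  "fixation_axiom p \<longleftrightarrow>
     (\<exists>g (es :: 'g event list). es \<noteq> [] \<and> set es \<subseteq> events
        \<and> (\<forall>ev\<in>set es. \<forall>x. 0 < p ev x)
        \<and> (\<exists>ev\<in>set es. g \<in> fst ev)
        \<and> (\<forall>h. foldr (\<lambda>ev f. snd ev \<circ> f) es id h = g))"

definition e_rate :: "('g::finite) rule \<Rightarrow> ('g \<Rightarrow> bool) \<Rightarrow> 'g \<Rightarrow> 'g \<Rightarrow> real" where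
  "e_rate p x g h = (\<Sum>ev\<in>{ev\<in>events. h \<in> fst ev \<and> snd ev h = g}. p ev x)"

definition d_rate :: "('g::finite) rule \<Rightarrow> ('g \<Rightarrow> bool) \<Rightarrow> 'g \<Rightarrow> real" where
  "d_rate p x g = (\<Sum>h\<in>UNIV. e_rate p x h g)"

definition assumption1 :: "('g::finite) rule \<Rightarrow> bool" where
  "assumption1 p \<longleftrightarrow> (\<forall>ev\<in>events. p ev state_A = p ev state_a)"

text \<open>Reproductive values, computed with e\<degree>, d\<degree> (values in state a, = values in A by Assumption 1).\<close>
definition repro_values :: "('g::finite) rule \<Rightarrow> 'g \<Rightarrow> real" where
  "repro_values p = (THE v. (\<forall>g. d_rate p state_a g * v g = (\<Sum>h\<in>UNIV. e_rate p state_a g h * v h))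
                          \<and> (\<Sum>g\<in>UNIV. v g) = real (card (UNIV :: 'g set)))"

definition b_hat :: "('g::finite) rule \<Rightarrow> ('g \<Rightarrow> bool) \<Rightarrow> 'g \<Rightarrow> real" where
  "b_hat p x g = (\<Sum>h\<in>UNIV. e_rate p x g h * repro_values p h)"

definition d_hat :: "('g::finite) rule \<Rightarrow> ('g \<Rightarrow> bool) \<Rightarrow> 'g \<Rightarrow> real" where
  "d_hat p x g = repro_values p g * d_rate p x g"

definition fitness :: "('g::finite) rule \<Rightarrow> ('g \<Rightarrow> bool) \<Rightarrow> 'g \<Rightarrow> real" where
  "fitness p x g = repro_values p g - d_hat p x g + b_hat p x g"

definition Delta_sel :: "('g::finite) rule \<Rightarrow> ('g \<Rightarrow> bool) \<Rightarrow> real" where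
  "Delta_sel p x = (\<Sum>g\<in>UNIV. of_bool (x g) * (b_hat p x g - d_hat p x g))"

definition ind_X :: "('g::finite \<Rightarrow> 'i) \<Rightarrow> ('g \<Rightarrow> bool) \<Rightarrow> 'i \<Rightarrow> real" where
  "ind_X ind x i = (1 / real (card {g. ind g = i})) * (\<Sum>g\<in>{g. ind g = i}. of_bool (x g))"

definition ind_V :: "('g::finite \<Rightarrow> 'i) \<Rightarrow> 'g rule \<Rightarrow> 'i \<Rightarrow> real" where
  "ind_V ind p i = (\<Sum>g\<in>{g. ind g = i}. repro_values p g)"

definition ind_W :: "('g::finite \<Rightarrow> 'i) \<Rightarrow> 'g rule \<Rightarrow> ('g \<Rightarrow> bool) \<Rightarrow> 'i \<Rightarrow> real" where
  "ind_W ind p x i = (\<Sum>g\<in>{g. ind g = i}. fitness p x g)"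

definition coherence :: "('g::finite \<Rightarrow> 'i) \<Rightarrow> 'g rule \<Rightarrow> bool" where
  "coherence ind p \<longleftrightarrow>
     (\<forall>g h. ind g = ind h \<longrightarrow>
        (\<forall>x. \<forall>R \<alpha>. (R, \<alpha>) \<in> events \<longrightarrow> 0 < p (R, \<alpha>) x \<longrightarrow> (g \<in> R \<longleftrightarrow> h \<in> R)))"

definition fair_meiosis :: "('g::finite \<Rightarrow> 'i) \<Rightarrow> 'g rule \<Rightarrow> bool" where
  "fair_meiosis ind p \<longleftrightarrow>
     (\<forall>R \<alpha>1 \<alpha>2. (R, \<alpha>1) \<in> events \<longrightarrow> (R, \<alpha>2) \<in> events \<longrightarrow>
        (\<forall>g\<in>R. ind (\<alpha>1 g) = ind (\<alpha>2 g)) \<longrightarrow> (\<forall>x. p (R, \<alpha>1) x = p (R, \<alpha>2) x))"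

end

theory Submission imports Defs "HOL-Analysis.Analysis" begin

lemma kernel_sign:
  fixes e :: "'g::finite \<Rightarrow> 'g \<Rightarrow> real" and r :: 'g and u :: "'g \<Rightarrow> real"
  assumes nonneg: "\<And>g h. 0 \<le> e g h"
    and reach: "\<And>h. (h, r) \<in> {(h,k). 0 < e k h}\<^sup>*"
    and ker: "\<And>g. (\<Sum>k\<in>UNIV. e k g) * u g = (\<Sum>h\<in>UNIV. e g h * u h)"
    and ur: "u r \<le> 0"
  shows "u g \<le> 0"
proof (rule ccontr)
  assume gpos: "\<not> u g \<le> 0"
  define S where "S = {g. 0 < u g}"
  define up where "up h = max (u h) 0" for h
  have up_nn: "0 \<le> up h" for h by (simp add: up_def)
  have le_up: "u h \<le> up h" for h by (simp add: up_def)
  have up_out: "h \<notin> S \<Longrightarrow> up h = 0" for h by (simp add: up_def S_def)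
  have up_in: "h \<in> S \<Longrightarrow> up h = u h" for h by (simp add: up_def S_def)
  define T where "T = (\<Sum>h\<in>UNIV. up h * ((\<Sum>k\<in>UNIV. e k h) - (\<Sum>k\<in>S. e k h)))"
  have diff_eq: "(\<Sum>k\<in>UNIV. e k h) - (\<Sum>k\<in>S. e k h) = (\<Sum>k\<in>-S. e k h)" for h
    using sum.subset_diff[of S UNIV "\<lambda>k. e k h"] by (simp add: Compl_eq_Diff_UNIV)
  have diff_nn: "0 \<le> (\<Sum>k\<in>UNIV. e k h) - (\<Sum>k\<in>S. e k h)" for h
    unfolding diff_eq by (rule sum_nonneg) (simp add: nonneg)
  have term_nn: "0 \<le> up h * ((\<Sum>k\<in>UNIV. e k h) - (\<Sum>k\<in>S. e k h))" for h
    using up_nn diff_nn by simp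
  have "(\<Sum>h\<in>UNIV. up h * (\<Sum>k\<in>UNIV. e k h)) = (\<Sum>h\<in>S. up h * (\<Sum>k\<in>UNIV. e k h))"
    by (rule sum.mono_neutral_right) (auto simp: up_out)
  also have "\<dots> = (\<Sum>g\<in>S. (\<Sum>k\<in>UNIV. e k g) * u g)"
    by (rule sum.cong) (auto simp: up_in)
  also have "\<dots> = (\<Sum>g\<in>S. \<Sum>h\<in>UNIV. e g h * u h)"
    by (rule sum.cong[OF refl]) (rule ker)
  also have "\<dots> \<le> (\<Sum>g\<in>S. \<Sum>h\<in>UNIV. e g h * up h)"
    by (intro sum_mono mult_left_mono le_up nonneg)
  also have "\<dots> = (\<Sum>h\<in>UNIV. \<Sum>g\<in>S. e g h * up h)"
    by (rule sum.swap)
  also have "\<dots> = (\<Sum>h\<in>UNIV. up h * (\<Sum>g\<in>S. e g h))"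
    unfolding sum_distrib_left by (rule sum.cong[OF refl], rule sum.cong[OF refl], rule mult.commute)
  finally have "T \<le> 0"
    unfolding T_def by (simp add: right_diff_distrib sum_subtractf)
  then have T0: "T = 0" unfolding T_def using term_nn by (meson order_antisym sum_nonneg)
  have zero: "up h * ((\<Sum>k\<in>UNIV. e k h) - (\<Sum>k\<in>S. e k h)) = 0" for h
    using T0 unfolding T_def by (simp add: sum_nonneg_eq_0_iff term_nn)
  have closed: "k \<in> S" if "h \<in> S" "0 < e k h" for h k
  proof (rule ccontr)
    assume "k \<notin> S"
    have "up h > 0" using that up_in S_def by auto
    then have "(\<Sum>k\<in>-S. e k h) = 0" using zero[of h] diff_eq[of h] by simp
    then have "e k h = 0" using sum_nonneg_eq_0_iff[of "-S" "\<lambda>k. e k h"] nonneg \<open>k \<notin> S\<close> by auto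
    with that show False by simp
  qed
  have "(g, r) \<in> {(h,k). 0 < e k h}\<^sup>*" by (rule reach)
  then have "r \<in> S"
  proof (induction rule: rtrancl_induct)
    case base then show ?case using gpos S_def by simp
  next
    case (step y z) then show ?case using closed by auto
  qed
  then show False using ur S_def by simp
qed

lemma stationary_unique:
  fixes e :: "'g::finite \<Rightarrow> 'g \<Rightarrow> real" and r :: 'g
  assumes nonneg: "\<And>g h. 0 \<le> e g h"
    and reach: "\<And>h. (h, r) \<in> {(h,k). 0 < e k h}\<^sup>*"
  shows "\<exists>!v. (\<forall>g. (\<Sum>k\<in>UNIV. e k g) * v g = (\<Sum>h\<in>UNIV. e g h * v h))
                \<and> (\<Sum>g\<in>UNIV. v g) = real (card (UNIV :: 'g set))"
proof -
  have sign: "(\<forall>g. u g \<le> 0) \<or> (\<forall>g. 0 \<le> u g)"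
    if ker: "\<forall>g. (\<Sum>k\<in>UNIV. e k g) * u g = (\<Sum>h\<in>UNIV. e g h * u h)" for u
  proof (cases "u r \<le> 0")
    case True then show ?thesis using kernel_sign[OF nonneg reach] ker by blast
  next
    case False
    have "- u g \<le> 0" for g
      by (rule kernel_sign[OF nonneg reach]) (use ker False in \<open>auto simp: sum_negf\<close>)
    then show ?thesis by auto
  qed
  define M :: "real^'g^'g" where "M = (\<chi> g h. e g h - (if g = h then (\<Sum>k\<in>UNIV. e k g) else 0))"
  have Mv: "(M *v x) $ g = (\<Sum>h\<in>UNIV. e g h * x $ h) - (\<Sum>k\<in>UNIV. e k g) * x $ g" for x g
  proof -
    have "(M *v x) $ g = (\<Sum>h\<in>UNIV. (e g h - (if g = h then (\<Sum>k\<in>UNIV. e k g) else 0)) * x $ h)"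
      by (simp add: M_def matrix_vector_mult_def)
    also have "\<dots> = (\<Sum>h\<in>UNIV. e g h * x $ h) - (\<Sum>h\<in>UNIV. (if g = h then (\<Sum>k\<in>UNIV. e k g) else 0) * x $ h)"
      by (simp add: left_diff_distrib sum_subtractf)
    also have "(\<Sum>h\<in>UNIV. (if g = h then (\<Sum>k\<in>UNIV. e k g) else 0) * x $ h) = (\<Sum>k\<in>UNIV. e k g) * x $ g"
      by (rule trans[OF sum.cong[OF refl, where h="\<lambda>h. if g = h then (\<Sum>k\<in>UNIV. e k g) * x $ g else 0"]]) auto
    finally show ?thesis .
  qed
  have tM1: "transpose M *v (\<chi> i. 1) = 0"
  proof (rule vec_eq_iff[THEN iffD2], rule allI)
    fix h
    have "(transpose M *v (\<chi> i. 1)) $ h = (\<Sum>g\<in>UNIV. e g h - (if g = h then (\<Sum>k\<in>UNIV. e k g) else 0))"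
      by (simp add: M_def matrix_vector_mult_def transpose_def)
    also have "\<dots> = 0" by (subst sum_subtractf) (simp add: sum.delta)
    finally show "(transpose M *v (\<chi> i. 1)) $ h = 0 $ h" by simp
  qed
  have "((\<chi> i. 1) :: real^'g) \<noteq> 0" by (simp add: vec_eq_iff)
  then have "\<not> (\<exists>B. B ** transpose M = mat 1)"
    using tM1 matrix_left_invertible_ker by blast
  then have "\<not> invertible (transpose M)" using invertible_left_inverse by blast
  then have "det M = 0" using invertible_det_nz det_transpose by metis
  then have "\<not> (\<exists>B. B ** M = mat 1)" using invertible_det_nz invertible_left_inverse by metis
  then obtain x where x: "M *v x = 0" "x \<noteq> 0" using matrix_left_invertible_ker by blast
  define u where "u g = x $ g" for g
  have keru: "\<forall>g. (\<Sum>k\<in>UNIV. e k g) * u g = (\<Sum>h\<in>UNIV. e g h * u h)"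
  proof
    fix g
    have "(M *v x) $ g = 0" using x(1) by simp
    then show "(\<Sum>k\<in>UNIV. e k g) * u g = (\<Sum>h\<in>UNIV. e g h * u h)"
      unfolding Mv u_def by simp
  qed
  obtain g0 where g0: "u g0 \<noteq> 0" using x(2) unfolding u_def by (auto simp: vec_eq_iff)
  obtain w where kerw: "\<forall>g. (\<Sum>k\<in>UNIV. e k g) * w g = (\<Sum>h\<in>UNIV. e g h * w h)"
      and wnn: "\<forall>g. 0 \<le> w g" and wg0: "w g0 \<noteq> 0"
  proof (cases "\<forall>g. 0 \<le> u g")
    case True then show ?thesis using that keru g0 by blast
  next
    case False
    then have "\<forall>g. u g \<le> 0" using sign keru by blast
    moreover have "\<forall>g. (\<Sum>k\<in>UNIV. e k g) * (- u g) = (\<Sum>h\<in>UNIV. e g h * (- u h))"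
      using keru by (simp add: sum_negf)
    ultimately show ?thesis using that[of "\<lambda>g. - u g"] g0 by auto
  qed
  have spos: "0 < (\<Sum>g\<in>UNIV. w g)"
  proof -
    have "w g0 \<le> (\<Sum>g\<in>UNIV. w g)" by (rule member_le_sum) (use wnn in auto)
    moreover have "0 < w g0" using wnn wg0 by (simp add: order_le_neq_trans)
    ultimately show ?thesis by simp
  qed
  define c where "c = real (card (UNIV :: 'g set)) / (\<Sum>g\<in>UNIV. w g)"
  define v where "v g = c * w g" for g
  have ex: "(\<forall>g. (\<Sum>k\<in>UNIV. e k g) * v g = (\<Sum>h\<in>UNIV. e g h * v h))
                \<and> (\<Sum>g\<in>UNIV. v g) = real (card (UNIV :: 'g set))"
  proof
    show "\<forall>g. (\<Sum>k\<in>UNIV. e k g) * v g = (\<Sum>h\<in>UNIV. e g h * v h)"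
    proof
      fix g
      have "(\<Sum>k\<in>UNIV. e k g) * v g = c * ((\<Sum>k\<in>UNIV. e k g) * w g)" by (simp add: v_def)
      also have "\<dots> = c * (\<Sum>h\<in>UNIV. e g h * w h)" using kerw by simp
      also have "\<dots> = (\<Sum>h\<in>UNIV. e g h * v h)" by (simp add: v_def sum_distrib_left mult.left_commute)
      finally show "(\<Sum>k\<in>UNIV. e k g) * v g = (\<Sum>h\<in>UNIV. e g h * v h)" .
    qed
    show "(\<Sum>g\<in>UNIV. v g) = real (card (UNIV :: 'g set))"
      using spos unfolding v_def by (simp only: sum_distrib_left[symmetric]) (simp add: c_def)
  qed
  show ?thesis
  proof (rule ex1I[of _ v])
    show "(\<forall>g. (\<Sum>k\<in>UNIV. e k g) * v g = (\<Sum>h\<in>UNIV. e g h * v h))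
                \<and> (\<Sum>g\<in>UNIV. v g) = real (card (UNIV :: 'g set))" by (rule ex)
  next
    fix v'
    assume v': "(\<forall>g. (\<Sum>k\<in>UNIV. e k g) * v' g = (\<Sum>h\<in>UNIV. e g h * v' h))
                \<and> (\<Sum>g\<in>UNIV. v' g) = real (card (UNIV :: 'g set))"
    define z where "z g = v' g - v g" for g
    have kerz: "\<forall>g. (\<Sum>k\<in>UNIV. e k g) * z g = (\<Sum>h\<in>UNIV. e g h * z h)"
      using v' ex by (simp add: z_def right_diff_distrib sum_subtractf)
    have sz: "(\<Sum>g\<in>UNIV. z g) = 0" using v' ex by (simp add: z_def sum_subtractf)
    have "\<forall>g. z g = 0"
    proof (cases "\<forall>g. z g \<le> 0")
      case True
      then show ?thesis using sz sum_nonneg_eq_0_iff[of UNIV "\<lambda>g. - z g"] by (auto simp: sum_negf)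
    next
      case False
      then have "\<forall>g. 0 \<le> z g" using sign kerz by blast
      then show ?thesis using sz sum_nonneg_eq_0_iff[of UNIV z] by auto
    qed
    then show "v' = v" unfolding z_def by auto
  qed
qed


definition sw :: "'a \<Rightarrow> 'a \<Rightarrow> 'a \<Rightarrow> 'a" where
  "sw a b k = (if k = a then b else if k = b then a else k)"

lemma sw_sw: "sw a b (sw a b k) = k" by (simp add: sw_def)

lemma e_rate_nonneg:
  assumes "replacement_rule p" shows "0 \<le> e_rate p x g h"
  using assms unfolding replacement_rule_def e_rate_def by (auto intro: sum_nonneg)

lemma e_rate_ge:
  assumes "replacement_rule p" "ev \<in> events" "h \<in> fst ev"
  shows "p ev x \<le> e_rate p x (snd ev h) h"
  unfolding e_rate_def
  by (rule member_le_sum) (use assms in \<open>auto simp: replacement_rule_def\<close>)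

lemma d_rate_ge:
  assumes "replacement_rule p" shows "e_rate p x k h \<le> d_rate p x h"
  unfolding d_rate_def
  by (rule member_le_sum) (auto intro: e_rate_nonneg[OF assms])

lemma d_rate_alt:
  "d_rate p x g = (\<Sum>ev\<in>events. if g \<in> fst ev then p ev x else 0)"
proof -
  have "d_rate p x g = (\<Sum>h\<in>UNIV. \<Sum>ev\<in>events. if snd ev g = h then (if g \<in> fst ev then p ev x else 0) else 0)"
    unfolding d_rate_def e_rate_def
    by (rule sum.cong[OF refl], subst sum.inter_filter) (auto intro: sum.cong)
  also have "\<dots> = (\<Sum>ev\<in>events. \<Sum>h\<in>UNIV. if snd ev g = h then (if g \<in> fst ev then p ev x else 0) else 0)"
    by (rule sum.swap)
  also have "\<dots> = (\<Sum>ev\<in>events. if g \<in> fst ev then p ev x else 0)"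
    by simp
  finally show ?thesis .
qed

lemma d_rate_sym:
  fixes p :: "('g::finite) rule" and ind :: "'g \<Rightarrow> 'i"
  assumes rr: "replacement_rule p" and coh: "coherence ind p" and gg: "ind g = ind g'"
  shows "d_rate p x g = d_rate p x g'"
  unfolding d_rate_alt
proof (rule sum.cong[OF refl])
  fix ev :: "'g event" assume ev: "ev \<in> events"
  obtain R \<alpha> where evd: "ev = (R, \<alpha>)" by (cases ev)
  show "(if g \<in> fst ev then p ev x else 0) = (if g' \<in> fst ev then p ev x else 0)"
  proof (cases "0 < p ev x")
    case True
    then have "g \<in> R \<longleftrightarrow> g' \<in> R" using coh gg ev evd unfolding coherence_def by blast
    then show ?thesis using evd by simp
  next
    case False
    have "0 \<le> p ev x" using rr ev unfolding replacement_rule_def by blast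
    with False have "p ev x = 0" by simp
    then show ?thesis by simp
  qed
qed

lemma e_rate_sym:
  fixes p :: "('g::finite) rule" and ind :: "'g \<Rightarrow> 'i"
  assumes fm: "fair_meiosis ind p" and gg: "ind g = ind g'"
  shows "e_rate p x g h = e_rate p x g' h"
proof -
  define \<phi> :: "'g event \<Rightarrow> 'g event" where
    "\<phi> ev = (fst ev, \<lambda>k. if k \<in> fst ev then sw g g' (snd ev k) else snd ev k)" for ev
  define A where "A c = {ev\<in>events. h \<in> fst ev \<and> snd ev h = c}" for c
  have ev\<phi>: "\<phi> ev \<in> events" if "ev \<in> events" for ev
    using that unfolding \<phi>_def events_def by auto
  have inv: "\<phi> (\<phi> ev) = ev" if "ev \<in> events" for ev
    using that unfolding \<phi>_def events_def by (cases ev) (auto simp: sw_sw)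
  have img1: "\<phi> ` A g \<subseteq> A g'" using ev\<phi> unfolding A_def by (auto simp: \<phi>_def sw_def)
  have img2: "\<phi> ` A g' \<subseteq> A g" using ev\<phi> unfolding A_def by (auto simp: \<phi>_def sw_def)
  have bij: "bij_betw \<phi> (A g) (A g')"
    by (rule bij_betw_byWitness[OF _ _ img1 img2]) (auto simp: A_def inv)
  have pp: "p (\<phi> ev) x = p ev x" if "ev \<in> events" for ev
  proof -
    obtain R \<alpha> where evd: "ev = (R, \<alpha>)" by (cases ev)
    have c3: "\<forall>k\<in>R. ind (if k \<in> R then sw g g' (\<alpha> k) else \<alpha> k) = ind (\<alpha> k)"
      using gg by (auto simp: sw_def)
    have c1: "(R, \<lambda>k. if k \<in> R then sw g g' (\<alpha> k) else \<alpha> k) \<in> events"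
      using that unfolding events_def evd by auto
    have c2: "(R, \<alpha>) \<in> events" using that evd by simp
    have "p (R, \<lambda>k. if k \<in> R then sw g g' (\<alpha> k) else \<alpha> k) x = p (R, \<alpha>) x"
      using fm unfolding fair_meiosis_def using c1 c2 c3 by blast
    then show ?thesis unfolding \<phi>_def evd fst_conv snd_conv .
  qed
  have "e_rate p x g' h = (\<Sum>ev\<in>A g. p (\<phi> ev) x)"
    unfolding e_rate_def A_def[symmetric] by (rule sum.reindex_bij_betw[OF bij, symmetric])
  also have "\<dots> = (\<Sum>ev\<in>A g. p ev x)" by (rule sum.cong) (auto simp: A_def pp)
  finally show ?thesis unfolding e_rate_def A_def by simp
qed

lemma foldr_reach:
  assumes rr: "replacement_rule p" and es: "set es \<subseteq> events" "\<forall>ev\<in>set es. \<forall>x. 0 < p ev x"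
  shows "(h, foldr (\<lambda>ev f. snd ev \<circ> f) es id h) \<in> {(h,k). 0 < e_rate p state_a k h}\<^sup>*"
  using es
proof (induction es)
  case Nil then show ?case by simp
next
  case (Cons ev es)
  define y where "y = foldr (\<lambda>ev f. snd ev \<circ> f) es id h"
  have a: "set es \<subseteq> events" "\<forall>ev\<in>set es. \<forall>x. 0 < p ev x" using Cons.prems by auto
  have IH: "(h, y) \<in> {(h,k). 0 < e_rate p state_a k h}\<^sup>*" unfolding y_def by (rule Cons.IH[OF a])
  have evs: "ev \<in> events" "0 < p ev state_a" using Cons.prems by auto
  have "(y, snd ev y) \<in> {(h,k). 0 < e_rate p state_a k h}\<^sup>*"
  proof (cases "y \<in> fst ev")
    case True
    then have "0 < e_rate p state_a (snd ev y) y"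
      using e_rate_ge[OF rr evs(1) True, of state_a] evs(2) by linarith
    then show ?thesis by auto
  next
    case False
    then have "snd ev y = y" using evs(1) unfolding events_def by (cases ev) auto
    then show ?thesis by simp
  qed
  with IH have fin: "(h, snd ev y) \<in> {(h,k). 0 < e_rate p state_a k h}\<^sup>*" by (rule rtrancl_trans)
  have eq: "foldr (\<lambda>ev f. snd ev \<circ> f) (ev # es) id h = snd ev y" by (simp add: y_def)
  show ?case by (subst eq) (rule fin)
qed

lemma foldr_fix:
  assumes "\<forall>ev\<in>set es. h \<notin> fst ev" "set es \<subseteq> events"
  shows "foldr (\<lambda>ev f. snd ev \<circ> f) es id h = h"
  using assms by (induction es) (auto simp: events_def)

theorem proposition5:
  fixes p :: "('g::finite) rule" and ind :: "'g \<Rightarrow> 'i"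
  assumes "replacement_rule p"
    and "fixation_axiom p"
    and "assumption1 p"
    and "coherence ind p"
    and "fair_meiosis ind p"
  shows "Delta_sel p x = (\<Sum>i\<in>range ind. ind_X ind x i * (ind_W ind p x i - ind_V ind p i))"
proof -
  note rr = assms(1) and coh = assms(4) and fm = assms(5)
  obtain r es where es: "es \<noteq> []" "set es \<subseteq> events" "\<forall>ev\<in>set es. \<forall>x. 0 < p ev x"
      "\<exists>ev\<in>set es. r \<in> fst ev" "\<forall>h. foldr (\<lambda>ev f. snd ev \<circ> f) es id h = r"
    using assms(2) unfolding fixation_axiom_def by blast
  have reach: "(h, r) \<in> {(h,k). 0 < e_rate p state_a k h}\<^sup>*" for h
    using foldr_reach[OF rr es(2,3), of h] unfolding es(5)[rule_format] .
  define v where "v = repro_values p"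
  have "\<exists>!v. (\<forall>g. (\<Sum>k\<in>UNIV. e_rate p state_a k g) * v g = (\<Sum>h\<in>UNIV. e_rate p state_a g h * v h))
                \<and> (\<Sum>g\<in>UNIV. v g) = real (card (UNIV :: 'g set))"
    by (rule stationary_unique[OF e_rate_nonneg[OF rr] reach])
  then have veq: "\<forall>g. d_rate p state_a g * v g = (\<Sum>h\<in>UNIV. e_rate p state_a g h * v h)"
    unfolding v_def repro_values_def d_rate_def by (rule theI'[THEN conjunct1])
  have dpos: "0 < d_rate p y h" for h y
  proof -
    have "\<exists>ev\<in>set es. h \<in> fst ev"
    proof (rule ccontr)
      assume "\<not> (\<exists>ev\<in>set es. h \<in> fst ev)"
      then have nf: "\<forall>ev\<in>set es. h \<notin> fst ev" by blast
      have "h = r" by (rule trans[OF foldr_fix[OF nf es(2), symmetric] es(5)[rule_format]])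
      then show False using es(4) nf by blast
    qed
    then obtain ev where ev: "ev \<in> set es" "h \<in> fst ev" by blast
    have "0 < p ev y" using es(3) ev by auto
    also have "\<dots> \<le> e_rate p y (snd ev h) h" using e_rate_ge[OF rr _ ev(2)] ev(1) es(2) by auto
    also have "\<dots> \<le> d_rate p y h" by (rule d_rate_ge[OF rr])
    finally show ?thesis .
  qed
  have vsym: "v g = v g'" if gg: "ind g = ind g'" for g g'
  proof -
    have "d_rate p state_a g * v g = d_rate p state_a g' * v g'"
      using veq e_rate_sym[OF fm gg] by simp
    moreover have "d_rate p state_a g = d_rate p state_a g'" by (rule d_rate_sym[OF rr coh gg])
    ultimately show ?thesis using dpos[of state_a g] by simp
  qed
  define f where "f g = b_hat p x g - d_hat p x g" for g
  have fsym: "f g = f g'" if gg: "ind g = ind g'" for g g'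
    unfolding f_def b_hat_def d_hat_def v_def[symmetric]
    using e_rate_sym[OF fm gg] d_rate_sym[OF rr coh gg] vsym[OF gg] by simp
  have "Delta_sel p x = (\<Sum>g\<in>UNIV. of_bool (x g) * f g)"
    unfolding Delta_sel_def f_def by simp
  also have "\<dots> = (\<Sum>i\<in>range ind. \<Sum>g\<in>{g. g \<in> UNIV \<and> ind g = i}. of_bool (x g) * f g)"
    by (rule sum.group[symmetric]) auto
  also have "\<dots> = (\<Sum>i\<in>range ind. ind_X ind x i * (ind_W ind p x i - ind_V ind p i))"
  proof (rule sum.cong[OF refl])
    fix i assume "i \<in> range ind"
    then obtain g0 where g0: "ind g0 = i" by auto
    define c where "c = real (card {g. ind g = i})"
    have cpos: "0 < c" unfolding c_def using g0 by (auto simp: card_gt_0_iff)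
    have "ind_W ind p x i - ind_V ind p i = (\<Sum>g\<in>{g. ind g = i}. f g)"
      unfolding ind_W_def ind_V_def fitness_def f_def by (simp add: sum_subtractf[symmetric])
    also have "\<dots> = (\<Sum>g\<in>{g. ind g = i}. f g0)" by (rule sum.cong) (auto intro: fsym simp: g0)
    also have "\<dots> = c * f g0" by (simp add: c_def)
    finally have W: "ind_W ind p x i - ind_V ind p i = c * f g0" .
    have "(\<Sum>g\<in>{g. g \<in> UNIV \<and> ind g = i}. of_bool (x g) * f g) = (\<Sum>g\<in>{g. ind g = i}. of_bool (x g) * f g0)"
      by (rule sum.cong) (auto intro: fsym simp: g0)
    also have "\<dots> = ind_X ind x i * (c * f g0)"
      unfolding ind_X_def c_def[symmetric] using cpos by (simp add: sum_distrib_right)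
    finally show "(\<Sum>g\<in>{g. g \<in> UNIV \<and> ind g = i}. of_bool (x g) * f g) = ind_X ind x i * (ind_W ind p x i - ind_V ind p i)"
      using W by simp
  qed
  finally show ?thesis .
qed

end
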